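(* Let $U=U^{(1)}\otimes\cdots\otimes U^{(x)}$ be a Kronecker product of $x\ge1$ unitary $2\times2$ matrices with nonzero entries, so $U$ has size $N=2^x$. Then $\mathcal I_U$ has only the two eigenspaces $\mathbb V_U(1)$ and $\mathbb V_U(-1)$, with $\mathbb C^{N\times N}=\mathbb V_U(1)\oplus\mathbb V_U(-1)$ orthogonal with respect to $\langle\cdot,\cdot\rangle_U$. An eigenbasis of $\mathcal I_U$ orthonormal with respect to $\langle\cdot,\cdot\rangle_U$ is formed by the Kronecker products $G^{(1)}\otimes\cdots\otimes G^{(x)}$, where each $G^{(k)}$ is one of the four matrices $$i\begin{pmatrix}1&1\\0&0\end{pmatrix},\ i\begin{pmatrix}0&0\\1&1\end{pmatrix},\ \tfrac{i}{\sqrt2|a_k||b_k|}\begin{pmatrix}|b_k|^2&-|a_k|^2\\|a_k|^2&-|b_k|^2\end{pmatrix}\ (\text{eigenvalue }1\text{ of }\mathcal I_{U^{(k)}}),\quad \tfrac{i|a_k||b_k|}{\sqrt2}\begin{pmatrix}1/|a_k|^2&-1/|b_k|^2\\-1/|b_k|^2&1/|a_k|^2\end{pmatrix}\ (\text{eigenvalue }-1),$$ with $(a_k,b_k)$ the first row of $U^{(k)}$; the eigenvalue of such a product is the product of the eigenvalues $\lambda_{G^{(k)}}$. The multiplicity of $1$ in the spectrum of $\mathcal I_U$ equals the number of sequences $(\lambda_{G^{(1)}},\dots,\lambda_{G^{(x)}})$ with an even number of $-1$'s, and this multiplicity (i.e. $\mathbf D(U)$) equals $2^x(2^x+1)/2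$.
   Context: For unitary $W$ with no zero entries: $\mathcal C_W(F)=(F\circ W)W^*$, $\mathcal D_W(F)=W(\overline F\circ W)^*$ ($\circ$ entrywise product), $\mathcal I_W=\mathcal C_W^{-1}\mathcal D_W$ on $\mathbb C^{N\times N}$; $\mathbb V_W(\lambda)$ is the eigenspace of $\mathcal I_W$ for $\lambda$. $\langle F,G\rangle_W=\sum_{i,j}|W_{i,j}|^2F_{i,j}\overline{G_{i,j}}$. $\mathbf D(W)=\dim_{\mathbb R}\{iR\circ W:\ R\text{ real},\ (iR\circ W)W^*\text{ antihermitian}\}$, which equals the multiplicity of $1$ in the spectrum of $\mathcal I_W$. *)

theory Defs
  imports Complex_Main "HOL-Library.Function_Algebras"
begin

text \<open>Square complex matrices are represented as functions nat => nat => complex;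
  an N x N matrix is one whose entries vanish outside the index range below N.
  Addition / zero / negation are the pointwise ones from Function_Algebras.\<close>

type_synonym cmat = "nat \<Rightarrow> nat \<Rightarrow> complex"

definition mspace :: "nat \<Rightarrow> cmat set" where
  "mspace N = {F. \<forall>i j. (N \<le> i \<or> N \<le> j) \<longrightarrow> F i j = 0}"

definition mmult :: "nat \<Rightarrow> cmat \<Rightarrow> cmat \<Rightarrow> cmat" where
  "mmult N A B = (\<lambda>i j. if i < N \<and> j < N then (\<Sum>k<N. A i k * B k j) else 0)"

definition adj :: "cmat \<Rightarrow> cmat" where
  "adj A = (\<lambda>i j. cnj (A j i))"

definition mconj :: "cmat \<Rightarrow> cmat" where
  "mconj A = (\<lambda>i j. cnj (A i j))"

definition hadamard :: "cmat \<Rightarrow> cmat \<Rightarrow> cmat" where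
  "hadamard A B = (\<lambda>i j. A i j * B i j)"

definition ident :: "nat \<Rightarrow> cmat" where
  "ident N = (\<lambda>i j. if i = j \<and> i < N then 1 else 0)"

definition cscale :: "complex \<Rightarrow> cmat \<Rightarrow> cmat" where
  "cscale c F = (\<lambda>i j. c * F i j)"

definition rscale :: "real \<Rightarrow> cmat \<Rightarrow> cmat" where
  "rscale r F = (\<lambda>i j. complex_of_real r * F i j)"

definition unitary_mat :: "nat \<Rightarrow> cmat \<Rightarrow> bool" where
  "unitary_mat N W \<longleftrightarrow> W \<in> mspace N \<and> mmult N W (adj W) = ident N \<and> mmult N (adj W) W = ident N"

definition no_zero_entries :: "nat \<Rightarrow> cmat \<Rightarrow> bool" where
  "no_zero_entries N W \<longleftrightarrow> (\<forall>i<N. \<forall>j<N. W i j \<noteq> 0)"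

definition C_op :: "nat \<Rightarrow> cmat \<Rightarrow> cmat \<Rightarrow> cmat" where
  "C_op N W F = mmult N (hadamard F W) (adj W)"

definition D_op :: "nat \<Rightarrow> cmat \<Rightarrow> cmat \<Rightarrow> cmat" where
  "D_op N W F = mmult N W (adj (hadamard (mconj F) W))"

definition I_op :: "nat \<Rightarrow> cmat \<Rightarrow> cmat \<Rightarrow> cmat" where
  "I_op N W F = (THE G. G \<in> mspace N \<and> C_op N W G = D_op N W F)"

definition eigsp :: "nat \<Rightarrow> cmat \<Rightarrow> complex \<Rightarrow> cmat set" where
  "eigsp N W lam = {F \<in> mspace N. I_op N W F = cscale lam F}"

definition ipW :: "nat \<Rightarrow> cmat \<Rightarrow> cmat \<Rightarrow> cmat \<Rightarrow> complex" where
  "ipW N W F G = (\<Sum>i<N. \<Sum>j<N. complex_of_real ((cmod (W i j))\<^sup>2) * F i j * cnj (G i j))"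

definition Dset :: "nat \<Rightarrow> cmat \<Rightarrow> cmat set" where
  "Dset N W = {hadamard (\<lambda>i j. \<i> * complex_of_real (R i j)) W | R :: nat \<Rightarrow> nat \<Rightarrow> real.
      adj (mmult N (hadamard (\<lambda>i j. \<i> * complex_of_real (R i j)) W) (adj W))
      = - mmult N (hadamard (\<lambda>i j. \<i> * complex_of_real (R i j)) W) (adj W)}"

definition Dnum :: "nat \<Rightarrow> cmat \<Rightarrow> nat" where
  "Dnum N W = vector_space.dim rscale (Dset N W)"

definition kron :: "nat \<Rightarrow> cmat \<Rightarrow> nat \<Rightarrow> cmat \<Rightarrow> cmat" where
  "kron n A m B = (\<lambda>i j. if i < n * m \<and> j < n * m
      then A (i div m) (j div m) * B (i mod m) (j mod m) else 0)"

fun kron_list :: "cmat list \<Rightarrow> cmat" where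
  "kron_list [] = (\<lambda>i j. if i = 0 \<and> j = 0 then 1 else 0)"
| "kron_list (A # As) = kron 2 A (2 ^ length As) (kron_list As)"

definition mat2 :: "complex \<Rightarrow> complex \<Rightarrow> complex \<Rightarrow> complex \<Rightarrow> cmat" where
  "mat2 p q r s = (\<lambda>i j. if i = 0 \<and> j = 0 then p else if i = 0 \<and> j = 1 then q
      else if i = 1 \<and> j = 0 then r else if i = 1 \<and> j = 1 then s else 0)"

text \<open>The four 2 x 2 basis matrices attached to a 2 x 2 unitary V with first row (a, b),
  indexed by t = 0,1,2,3 (in the order of the paper).\<close>

definition Gmat :: "cmat \<Rightarrow> nat \<Rightarrow> cmat" where
  "Gmat V t = (let a = cmod (V 0 0); b = cmod (V 0 1) in
     if t = 0 then cscale \<i> (mat2 1 1 0 0)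
     else if t = 1 then cscale \<i> (mat2 0 0 1 1)
     else if t = 2 then cscale (\<i> / complex_of_real (sqrt 2 * a * b))
        (mat2 (complex_of_real (b\<^sup>2)) (- complex_of_real (a\<^sup>2)) (complex_of_real (a\<^sup>2)) (- complex_of_real (b\<^sup>2)))
     else cscale (\<i> * complex_of_real (a * b / sqrt 2))
        (mat2 (complex_of_real (1 / a\<^sup>2)) (- complex_of_real (1 / b\<^sup>2)) (- complex_of_real (1 / b\<^sup>2)) (complex_of_real (1 / a\<^sup>2))))"

definition lamG :: "nat \<Rightarrow> complex" where
  "lamG t = (if t = 3 then -1 else 1)"

definition choices :: "nat \<Rightarrow> nat list set" where
  "choices x = {s. length s = x \<and> set s \<subseteq> {0..<4}}"

definition Gprod :: "cmat list \<Rightarrow> nat list \<Rightarrow> cmat" where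
  "Gprod Us s = kron_list (map2 Gmat Us s)"

end

theory Submission
  imports Defs
begin

lemma sum_fun_apply2: "(sum f A) i j = (\<Sum>a\<in>A. f a i j)"
  by (induction A rule: infinite_finite_induct) auto

interpretation cvs: vector_space cscale
  by unfold_locales (auto simp: cscale_def fun_eq_iff algebra_simps)

interpretation rvs: vector_space rscale
  by unfold_locales (auto simp: rscale_def fun_eq_iff algebra_simps)

lemma sum_split_nat: fixes n m :: nat shows "(\<Sum>k<n*m. g k) = (\<Sum>a<n. \<Sum>b<m. g (a*m+b))"
proof (induction n)
  case 0 then show ?case by simp
next
  case (Suc n)
  have "{..<Suc n * m} = {..<n*m} \<union> {n*m..<n*m+m}" by auto
  then have "(\<Sum>k<Suc n*m. g k) = (\<Sum>k<n*m. g k) + (\<Sum>k\<in>{n*m..<n*m+m}. g k)"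
    by (simp add: sum.union_disjoint ivl_disj_int)
  also have "(\<Sum>k\<in>{n*m..<n*m+m}. g k) = (\<Sum>b<m. g (n*m+b))"
    using sum.shift_bounds_nat_ivl[of g 0 "n*m" m] by (simp add: atLeast0LessThan add.commute)
  finally show ?case using Suc by simp
qed


definition Iexp :: "nat \<Rightarrow> cmat \<Rightarrow> cmat \<Rightarrow> cmat" where
  "Iexp N W F = (\<lambda>i j. if i < N \<and> j < N then
     (\<Sum>k<N. \<Sum>l<N. F l k * cnj (W l k) * W i k * W l j) / W i j else 0)"

definition rowo :: "nat \<Rightarrow> cmat \<Rightarrow> bool" where
  "rowo N W \<longleftrightarrow> (\<forall>l<N. \<forall>j<N. (\<Sum>k<N. W l k * cnj (W j k)) = (if l = j then 1 else 0))"

definition colo :: "nat \<Rightarrow> cmat \<Rightarrow> bool" where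
  "colo N W \<longleftrightarrow> (\<forall>k<N. \<forall>m<N. (\<Sum>j<N. cnj (W j k) * W j m) = (if k = m then 1 else 0))"

lemma unitary_rowo: "unitary_mat N W \<Longrightarrow> rowo N W"
  unfolding unitary_mat_def rowo_def
proof (intro allI impI)
  fix l j assume "W \<in> mspace N \<and> mmult N W (adj W) = ident N \<and> mmult N (adj W) W = ident N" "l < N" "j < N"
  then have "mmult N W (adj W) l j = ident N l j" by simp
  then show "(\<Sum>k<N. W l k * cnj (W j k)) = (if l = j then 1 else 0)"
    using \<open>l<N\<close> \<open>j<N\<close> by (simp add: mmult_def adj_def ident_def)
qed

lemma unitary_colo: "unitary_mat N W \<Longrightarrow> colo N W"
  unfolding unitary_mat_def colo_def
proof (intro allI impI)
  fix k m assume "W \<in> mspace N \<and> mmult N W (adj W) = ident N \<and> mmult N (adj W) W = ident N" "k < N" "m < N"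
  then have "mmult N (adj W) W k m = ident N k m" by simp
  then show "(\<Sum>j<N. cnj (W j k) * W j m) = (if k = m then 1 else 0)"
    using \<open>k<N\<close> \<open>m<N\<close> by (simp add: mmult_def adj_def ident_def)
qed

lemma swap3:
  fixes f :: "'a \<Rightarrow> 'b \<Rightarrow> complex"
  shows "(\<Sum>k\<in>A. (\<Sum>k'\<in>B. \<Sum>l\<in>C. f k' l * g l k) * h k) = (\<Sum>k'\<in>B. \<Sum>l\<in>C. f k' l * (\<Sum>k\<in>A. g l k * h k))"
proof -
  have "(\<Sum>k\<in>A. (\<Sum>k'\<in>B. \<Sum>l\<in>C. f k' l * g l k) * h k) = (\<Sum>k\<in>A. \<Sum>k'\<in>B. \<Sum>l\<in>C. f k' l * g l k * h k)"
    by (simp add: sum_distrib_right)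
  also have "\<dots> = (\<Sum>k'\<in>B. \<Sum>k\<in>A. \<Sum>l\<in>C. f k' l * g l k * h k)"
    by (rule sum.swap)
  also have "\<dots> = (\<Sum>k'\<in>B. \<Sum>l\<in>C. \<Sum>k\<in>A. f k' l * g l k * h k)"
    by (intro sum.cong refl, rule sum.swap)
  also have "\<dots> = (\<Sum>k'\<in>B. \<Sum>l\<in>C. f k' l * (\<Sum>k\<in>A. g l k * h k))"
    by (simp add: sum_distrib_left mult.assoc)
  finally show ?thesis .
qed

lemma Iexp_mspace: "Iexp N W F \<in> mspace N"
  by (auto simp: Iexp_def mspace_def)

lemma C_Iexp:
  assumes r: "rowo N W" and nz: "no_zero_entries N W"
  shows "C_op N W (Iexp N W F) = D_op N W F"
proof (rule ext, rule ext)
  fix i j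
  show "C_op N W (Iexp N W F) i j = D_op N W F i j"
  proof (cases "i < N \<and> j < N")
    case False then show ?thesis by (auto simp: C_op_def D_op_def mmult_def)
  next
    case True
    have "C_op N W (Iexp N W F) i j = (\<Sum>k<N. Iexp N W F i k * W i k * cnj (W j k))"
      using True by (simp add: C_op_def mmult_def hadamard_def adj_def)
    also have "\<dots> = (\<Sum>k<N. (\<Sum>k'<N. \<Sum>l<N. F l k' * cnj (W l k') * W i k' * W l k) * cnj (W j k))"
      by (rule sum.cong) (use True nz in \<open>auto simp: Iexp_def no_zero_entries_def\<close>)
    also have "\<dots> = (\<Sum>k'<N. \<Sum>l<N. F l k' * cnj (W l k') * W i k' * (\<Sum>k<N. W l k * cnj (W j k)))"
      by (rule swap3)
    also have "\<dots> = (\<Sum>k'<N. \<Sum>l<N. F l k' * cnj (W l k') * W i k' * (if l = j then 1 else 0))"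
      using r True unfolding rowo_def by (intro sum.cong refl) auto
    also have "\<dots> = (\<Sum>k'<N. F j k' * cnj (W j k') * W i k')"
      using True by (simp add: if_distrib cong: if_cong)
    also have "\<dots> = D_op N W F i j"
      using True by (simp add: D_op_def mmult_def hadamard_def adj_def mconj_def mult_ac)
    finally show ?thesis .
  qed
qed

lemma C_inj:
  assumes c: "colo N W" and nz: "no_zero_entries N W"
    and G: "G \<in> mspace N" and G': "G' \<in> mspace N" and eq: "C_op N W G = C_op N W G'"
  shows "G = G'"
proof (rule ext, rule ext)
  fix i m
  show "G i m = G' i m"
  proof (cases "i < N \<and> m < N")
    case False then show ?thesis using G G' by (auto simp: mspace_def)
  next
    case True
    define H where "H = (\<lambda>k. (G i k - G' i k) * W i k)"
    have z: "(\<Sum>k<N. H k * cnj (W j k)) = 0" if "j < N" for j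
    proof -
      have "C_op N W G i j = C_op N W G' i j" using eq by simp
      then have "(\<Sum>k<N. G i k * W i k * cnj (W j k)) = (\<Sum>k<N. G' i k * W i k * cnj (W j k))"
        using True that by (simp add: C_op_def mmult_def hadamard_def adj_def)
      then show ?thesis
        by (simp add: H_def algebra_simps sum_subtractf)
    qed
    have "0 = (\<Sum>j<N. (\<Sum>k<N. H k * cnj (W j k)) * W j m)"
      using z by simp
    also have "\<dots> = (\<Sum>k<N. H k * (\<Sum>j<N. cnj (W j k) * W j m))"
      by (simp add: sum_distrib_left sum_distrib_right mult_ac) (rule sum.swap)
    also have "\<dots> = (\<Sum>k<N. H k * (if k = m then 1 else 0))"
      using c True unfolding colo_def by (intro sum.cong refl) auto
    also have "\<dots> = H m" using True by (simp add: if_distrib cong: if_cong)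
    finally have "H m = 0" by simp
    then show ?thesis using nz True by (simp add: H_def no_zero_entries_def)
  qed
qed

lemma I_op_eq:
  assumes "rowo N W" "colo N W" "no_zero_entries N W"
  shows "I_op N W F = Iexp N W F"
  unfolding I_op_def
proof (rule the_equality)
  show "Iexp N W F \<in> mspace N \<and> C_op N W (Iexp N W F) = D_op N W F"
    using assms by (simp add: Iexp_mspace C_Iexp)
next
  fix G assume "G \<in> mspace N \<and> C_op N W G = D_op N W F"
  then show "G = Iexp N W F"
    using assms C_inj[of N W G "Iexp N W F"] by (simp add: Iexp_mspace C_Iexp)
qed

lemma eigsp_eq:
  assumes "rowo N W" "colo N W" "no_zero_entries N W"
  shows "eigsp N W lam = {F \<in> mspace N. Iexp N W F = cscale lam F}"
  using I_op_eq[OF assms] by (simp add: eigsp_def)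


lemma idx_lt: "a < n \<Longrightarrow> b < (m::nat) \<Longrightarrow> a*m+b < n*m"
proof -
  assume "a < n" "b < m"
  then have "a*m+b < a*m+m" by simp
  also have "\<dots> = Suc a * m" by simp
  also have "\<dots> \<le> n*m" using \<open>a<n\<close> by (intro mult_le_mono1) simp
  finally show ?thesis .
qed

lemma idx_div[simp]: "b < (m::nat) \<Longrightarrow> (a*m+b) div m = a" by simp
lemma idx_mod[simp]: "b < (m::nat) \<Longrightarrow> (a*m+b) mod m = b" by simp

lemma idx_decomp:
  fixes i n m :: nat assumes "i < n*m"
  obtains a b where "a < n" "b < m" "i = a*m+b"
proof -
  have "m > 0" using assms by (cases m) auto
  have "i div m < n" using assms by (simp add: less_mult_imp_div_less)
  moreover have "i mod m < m" using \<open>m>0\<close> by simp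
  moreover have "i = (i div m)*m + i mod m" by simp
  ultimately show ?thesis using that by blast
qed

lemma kron_idx:
  "a < n \<Longrightarrow> b < m \<Longrightarrow> c < n \<Longrightarrow> d < m \<Longrightarrow> kron n A m B (a*m+b) (c*m+d) = A a c * B b d"
  by (simp add: kron_def idx_lt)

lemma kron_out: "\<not> (i < n*m \<and> j < n*m) \<Longrightarrow> kron n A m B i j = 0"
  unfolding kron_def by auto

lemma sum_split2:
  fixes n m :: nat
  shows "(\<Sum>k<n*m. \<Sum>l<n*m. g k l) = (\<Sum>a<n. \<Sum>b<m. \<Sum>c<n. \<Sum>d<m. g (a*m+b) (c*m+d))"
  by (simp add: sum_split_nat)

lemma kron_mspace: "kron n A m B \<in> mspace (n*m)"
  by (auto simp: mspace_def kron_def)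

lemma Iexp_kron:
  "Iexp (n*m) (kron n A m B) (kron n F m G) = kron n (Iexp n A F) m (Iexp m B G)"
proof (rule ext, rule ext)
  fix i j
  show "Iexp (n*m) (kron n A m B) (kron n F m G) i j = kron n (Iexp n A F) m (Iexp m B G) i j"
  proof (cases "i < n*m \<and> j < n*m")
    case False then show ?thesis by (auto simp: Iexp_def kron_def)
  next
    case True
    then obtain a0 b0 c0 d0 where i: "a0 < n" "b0 < m" "i = a0*m+b0" and j: "c0 < n" "d0 < m" "j = c0*m+d0"
      by (meson idx_decomp)
    define X where "X a c = F c a * cnj (A c a) * A a0 a * A c c0" for a c
    define Y where "Y b d = G d b * cnj (B d b) * B b0 b * B d d0" for b d
    let ?K = "kron n A m B" and ?L = "kron n F m G"
    have "(\<Sum>k<n*m. \<Sum>l<n*m. ?L l k * cnj (?K l k) * ?K i k * ?K l j)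
        = (\<Sum>a<n. \<Sum>b<m. \<Sum>c<n. \<Sum>d<m. X a c * Y b d)"
      unfolding sum_split2
      by (intro sum.cong refl) (simp add: i j kron_idx X_def Y_def mult_ac)
    also have "\<dots> = (\<Sum>a<n. \<Sum>c<n. \<Sum>b<m. \<Sum>d<m. X a c * Y b d)"
      by (rule sum.cong[OF refl], rule sum.swap)
    also have "\<dots> = (\<Sum>a<n. \<Sum>c<n. X a c) * (\<Sum>b<m. \<Sum>d<m. Y b d)"
      by (simp only: sum_distrib_right, simp only: sum_distrib_left)
    finally have e: "(\<Sum>k<n*m. \<Sum>l<n*m. ?L l k * cnj (?K l k) * ?K i k * ?K l j)
        = (\<Sum>a<n. \<Sum>c<n. X a c) * (\<Sum>b<m. \<Sum>d<m. Y b d)" .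
    have "Iexp (n*m) ?K ?L i j = ((\<Sum>a<n. \<Sum>c<n. X a c) * (\<Sum>b<m. \<Sum>d<m. Y b d)) / (A a0 c0 * B b0 d0)"
      using True e by (simp add: Iexp_def i j kron_idx)
    also have "\<dots> = Iexp n A F a0 c0 * Iexp m B G b0 d0"
      using i j by (simp add: Iexp_def X_def Y_def times_divide_times_eq)
    also have "\<dots> = kron n (Iexp n A F) m (Iexp m B G) i j"
      using i j by (simp add: kron_idx)
    finally show ?thesis .
  qed
qed

lemma ipW_kron:
  "ipW (n*m) (kron n A m B) (kron n F m G) (kron n F' m G') = ipW n A F F' * ipW m B G G'"
proof -
  have "ipW (n*m) (kron n A m B) (kron n F m G) (kron n F' m G')
     = (\<Sum>a<n. \<Sum>b<m. \<Sum>c<n. \<Sum>d<m.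
         (complex_of_real ((cmod (A a c))\<^sup>2) * F a c * cnj (F' a c)) *
         (complex_of_real ((cmod (B b d))\<^sup>2) * G b d * cnj (G' b d)))"
    unfolding ipW_def sum_split2
    by (intro sum.cong refl) (simp add: kron_idx norm_mult power_mult_distrib mult_ac)
  also have "\<dots> = (\<Sum>a<n. \<Sum>c<n. \<Sum>b<m. \<Sum>d<m.
         (complex_of_real ((cmod (A a c))\<^sup>2) * F a c * cnj (F' a c)) *
         (complex_of_real ((cmod (B b d))\<^sup>2) * G b d * cnj (G' b d)))"
    by (rule sum.cong[OF refl], rule sum.swap)
  also have "\<dots> = ipW n A F F' * ipW m B G G'"
    unfolding ipW_def by (simp only: sum_distrib_right, simp only: sum_distrib_left)
  finally show ?thesis .
qed

lemma kron_nz: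
  "no_zero_entries n A \<Longrightarrow> no_zero_entries m B \<Longrightarrow> no_zero_entries (n*m) (kron n A m B)"
  unfolding no_zero_entries_def
proof (intro allI impI)
  fix i j assume a: "\<forall>i<n. \<forall>j<n. A i j \<noteq> 0" "\<forall>i<m. \<forall>j<m. B i j \<noteq> 0" and ij: "i < n*m" "j < n*m"
  obtain a0 b0 where i: "a0 < n" "b0 < m" "i = a0*m+b0" using ij idx_decomp by blast
  obtain c0 d0 where j: "c0 < n" "d0 < m" "j = c0*m+d0" using ij idx_decomp by blast
  show "kron n A m B i j \<noteq> 0" using a i j by (simp add: kron_idx)
qed

lemma kron_rowo:
  assumes "rowo n A" "rowo m B" shows "rowo (n*m) (kron n A m B)"
  unfolding rowo_def
proof (intro allI impI)
  fix l j assume "l < n*m" "j < n*m"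
  then obtain a0 b0 c0 d0 where i: "a0 < n" "b0 < m" "l = a0*m+b0" and j: "c0 < n" "d0 < m" "j = c0*m+d0"
    by (meson idx_decomp)
  have "(\<Sum>k<n*m. kron n A m B l k * cnj (kron n A m B j k))
      = (\<Sum>a<n. \<Sum>b<m. (A a0 a * cnj (A c0 a)) * (B b0 b * cnj (B d0 b)))"
    unfolding sum_split_nat by (intro sum.cong refl) (simp add: i j kron_idx mult_ac)
  also have "\<dots> = (\<Sum>a<n. A a0 a * cnj (A c0 a)) * (\<Sum>b<m. B b0 b * cnj (B d0 b))"
    by (rule sum_product[symmetric])
  also have "\<dots> = (if a0 = c0 then 1 else 0) * (if b0 = d0 then 1 else 0)"
    using assms i j unfolding rowo_def by simp
  also have "\<dots> = (if l = j then 1 else 0)"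
    using i j by (auto, metis idx_div idx_mod)
  finally show "(\<Sum>k<n*m. kron n A m B l k * cnj (kron n A m B j k)) = (if l = j then 1 else 0)" .
qed

lemma kron_colo:
  assumes "colo n A" "colo m B" shows "colo (n*m) (kron n A m B)"
  unfolding colo_def
proof (intro allI impI)
  fix l j assume "l < n*m" "j < n*m"
  then obtain a0 b0 c0 d0 where i: "a0 < n" "b0 < m" "l = a0*m+b0" and j: "c0 < n" "d0 < m" "j = c0*m+d0"
    by (meson idx_decomp)
  have "(\<Sum>k<n*m. cnj (kron n A m B k l) * kron n A m B k j)
      = (\<Sum>a<n. \<Sum>b<m. (cnj (A a a0) * A a c0) * (cnj (B b b0) * B b d0))"
    unfolding sum_split_nat by (intro sum.cong refl) (simp add: i j kron_idx mult_ac)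
  also have "\<dots> = (\<Sum>a<n. cnj (A a a0) * A a c0) * (\<Sum>b<m. cnj (B b b0) * B b d0)"
    by (rule sum_product[symmetric])
  also have "\<dots> = (if a0 = c0 then 1 else 0) * (if b0 = d0 then 1 else 0)"
    using assms i j unfolding colo_def by simp
  also have "\<dots> = (if l = j then 1 else 0)"
    using i j by (auto, metis idx_div idx_mod)
  finally show "(\<Sum>k<n*m. cnj (kron n A m B k l) * kron n A m B k j) = (if l = j then 1 else 0)" .
qed

lemma kron_cscale: "kron n (cscale c A) m (cscale d B) = cscale (c*d) (kron n A m B)"
  by (auto simp: kron_def cscale_def fun_eq_iff)

lemma kron_list_mspace: "kron_list As \<in> mspace (2 ^ length As)"
  by (cases As) (auto simp: mspace_def kron_def)


lemma sum2: "(\<Sum>k<(2::nat). f k) = f 0 + f 1"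
  by (simp add: numeral_2_eq_2)

lemma one_lt_2: "(1::nat) < 2" by simp

lemma facts2:
  assumes r: "rowo 2 V" and c: "colo 2 V"
  shows "V 0 0*cnj (V 0 0) + V 0 1*cnj (V 0 1) = 1" "V 0 0*cnj (V 1 0) + V 0 1*cnj (V 1 1) = 0"
    "V 1 0*cnj (V 0 0) + V 1 1*cnj (V 0 1) = 0" "V 1 0*cnj (V 1 0) + V 1 1*cnj (V 1 1) = 1"
    "cnj (V 0 0)*V 0 0 + cnj (V 1 0)*V 1 0 = 1" "cnj (V 0 0)*V 0 1 + cnj (V 1 0)*V 1 1 = 0"
    "cnj (V 0 1)*V 0 0 + cnj (V 1 1)*V 1 0 = 0" "cnj (V 0 1)*V 0 1 + cnj (V 1 1)*V 1 1 = 1"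
  using r c unfolding rowo_def colo_def
  by (simp_all add: sum2)

lemma Iexp2:
  assumes r: "rowo 2 V" and c: "colo 2 V" and nz: "no_zero_entries 2 V"
  defines "p \<equiv> V 0 0 * cnj (V 0 0)" and "q \<equiv> V 0 1 * cnj (V 0 1)"
  shows "Iexp 2 V (mat2 g00 g01 g10 g11) =
    mat2 (p*g00 + q*g01 + q*g10 - q*g11) (p*g00 + q*g01 - p*g10 + p*g11)
         (p*g00 - p*g01 + q*g10 + p*g11) (- q*g00 + q*g01 + q*g10 + p*g11)"
proof -
  note f = facts2[OF r c]
  have nz': "V 0 0 \<noteq> 0" "V 0 1 \<noteq> 0" "V 1 0 \<noteq> 0" "V 1 1 \<noteq> 0"
    using nz unfolding no_zero_entries_def by auto
  have e: "Iexp 2 V (mat2 g00 g01 g10 g11) i j = (\<Sum>k<2. \<Sum>l<2. mat2 g00 g01 g10 g11 l k * cnj (V l k) * V i k * V l j) / V i j"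
    if "i < 2" "j < 2" for i j using that by (simp add: Iexp_def)
  have e00: "Iexp 2 V (mat2 g00 g01 g10 g11) 0 0 = p*g00 + q*g01 + q*g10 - q*g11"
    unfolding e[OF pos2 pos2] using nz' f unfolding p_def q_def
    by (simp add: sum2 mat2_def divide_eq_eq) algebra
  have e01: "Iexp 2 V (mat2 g00 g01 g10 g11) 0 1 = p*g00 + q*g01 - p*g10 + p*g11"
    unfolding e[OF pos2 one_lt_2] using nz' f unfolding p_def q_def
    by (simp add: sum2 mat2_def divide_eq_eq) algebra
  have e10: "Iexp 2 V (mat2 g00 g01 g10 g11) 1 0 = p*g00 - p*g01 + q*g10 + p*g11"
    unfolding e[OF one_lt_2 pos2] using nz' f unfolding p_def q_def
    by (simp add: sum2 mat2_def divide_eq_eq) algebra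
  have e11: "Iexp 2 V (mat2 g00 g01 g10 g11) 1 1 = - q*g00 + q*g01 + q*g10 + p*g11"
    unfolding e[OF one_lt_2 one_lt_2] using nz' f unfolding p_def q_def
    by (simp add: sum2 mat2_def divide_eq_eq) algebra
  show ?thesis
  proof (rule ext, rule ext)
    fix i j :: nat
    show "Iexp 2 V (mat2 g00 g01 g10 g11) i j = mat2 (p*g00 + q*g01 + q*g10 - q*g11) (p*g00 + q*g01 - p*g10 + p*g11)
         (p*g00 - p*g01 + q*g10 + p*g11) (- q*g00 + q*g01 + q*g10 + p*g11) i j"
    proof (cases "i < 2 \<and> j < 2")
      case True
      then have "i = 0 \<or> i = 1" "j = 0 \<or> j = 1" by auto
      then show ?thesis using e00 e01 e10 e11 by (auto simp: mat2_def)
    next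
      case False then show ?thesis by (auto simp: Iexp_def mat2_def)
    qed
  qed
qed


definition rm :: "real \<Rightarrow> real \<Rightarrow> real \<Rightarrow> real \<Rightarrow> nat \<Rightarrow> nat \<Rightarrow> real" where
  "rm p q r s = (\<lambda>i j. if i = 0 \<and> j = 0 then p else if i = 0 \<and> j = 1 then q
      else if i = 1 \<and> j = 0 then r else if i = 1 \<and> j = 1 then s else 0)"

definition gr :: "real \<Rightarrow> real \<Rightarrow> nat \<Rightarrow> nat \<Rightarrow> nat \<Rightarrow> real" where
  "gr a b t = (if t = 0 then rm 1 1 0 0 else if t = 1 then rm 0 0 1 1
     else if t = 2 then rm (b\<^sup>2 / (sqrt 2 * a * b)) (- a\<^sup>2 / (sqrt 2 * a * b)) (a\<^sup>2 / (sqrt 2 * a * b)) (- b\<^sup>2 / (sqrt 2 * a * b))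
     else rm (a * b / sqrt 2 / a\<^sup>2) (- (a * b / sqrt 2) / b\<^sup>2) (- (a * b / sqrt 2) / b\<^sup>2) (a * b / sqrt 2 / a\<^sup>2))"

lemma Gmat_gr: "Gmat V t = (\<lambda>i j. \<i> * complex_of_real (gr (cmod (V 0 0)) (cmod (V 0 1)) t i j))"
  by (auto simp: Gmat_def gr_def rm_def mat2_def cscale_def Let_def fun_eq_iff)

lemma cmod_facts:
  assumes r: "rowo 2 V" and c: "colo 2 V" and nz: "no_zero_entries 2 V"
  shows "cmod (V 0 0) > 0" "cmod (V 0 1) > 0" "(cmod (V 0 0))\<^sup>2 + (cmod (V 0 1))\<^sup>2 = 1"
    "cmod (V 1 0) = cmod (V 0 1)" "cmod (V 1 1) = cmod (V 0 0)"
proof -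
  note f = facts2[OF r c]
  show "cmod (V 0 0) > 0" "cmod (V 0 1) > 0" using nz by (auto simp: no_zero_entries_def)
  have n: "complex_of_real ((cmod z)\<^sup>2) = z * cnj z" "complex_of_real ((cmod z)\<^sup>2) = cnj z * z" for z
    by (simp only: complex_norm_square, simp only: complex_norm_square mult.commute)
  have "complex_of_real ((cmod (V 0 0))\<^sup>2 + (cmod (V 0 1))\<^sup>2) = 1" using f(1) by (simp only: of_real_add n(1))
  then show s: "(cmod (V 0 0))\<^sup>2 + (cmod (V 0 1))\<^sup>2 = 1" by (metis of_real_eq_1_iff)
  have "complex_of_real ((cmod (V 0 0))\<^sup>2 + (cmod (V 1 0))\<^sup>2) = 1" using f(5) by (simp only: of_real_add n(2))
  then have "(cmod (V 0 0))\<^sup>2 + (cmod (V 1 0))\<^sup>2 = 1" by (metis of_real_eq_1_iff)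
  with s have "(cmod (V 1 0))\<^sup>2 = (cmod (V 0 1))\<^sup>2" by linarith
  then show "cmod (V 1 0) = cmod (V 0 1)" by (simp add: power2_eq_iff_nonneg)
  have "complex_of_real ((cmod (V 0 1))\<^sup>2 + (cmod (V 1 1))\<^sup>2) = 1" using f(8) by (simp only: of_real_add n(2))
  then have "(cmod (V 0 1))\<^sup>2 + (cmod (V 1 1))\<^sup>2 = 1" by (metis of_real_eq_1_iff)
  with s have "(cmod (V 1 1))\<^sup>2 = (cmod (V 0 0))\<^sup>2" by linarith
  then show "cmod (V 1 1) = cmod (V 0 0)" by (simp add: power2_eq_iff_nonneg)
qed

lemma ipW_imag:
  "ipW 2 V (\<lambda>i j. \<i> * complex_of_real (r i j)) (\<lambda>i j. \<i> * complex_of_real (r' i j)) =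
   complex_of_real ((cmod (V 0 0))\<^sup>2 * r 0 0 * r' 0 0 + (cmod (V 0 1))\<^sup>2 * r 0 1 * r' 0 1
     + (cmod (V 1 0))\<^sup>2 * r 1 0 * r' 1 0 + (cmod (V 1 1))\<^sup>2 * r 1 1 * r' 1 1)"
  by (simp add: ipW_def sum2 algebra_simps)

lemma Gmat_ortho:
  assumes r: "rowo 2 V" and c: "colo 2 V" and nz: "no_zero_entries 2 V" and t: "t < 4" "t' < 4"
  shows "ipW 2 V (Gmat V t) (Gmat V t') = (if t = t' then 1 else 0)"
proof -
  note cf = cmod_facts[OF r c nz]
  define a where "a = cmod (V 0 0)"
  define b where "b = cmod (V 0 1)"
  have a: "a > 0" and b: "b > 0" and ab: "a\<^sup>2 + b\<^sup>2 = 1" using cf by (auto simp: a_def b_def)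
  have s2: "sqrt 2 * sqrt 2 = (2::real)" by simp
  have key: "a\<^sup>2 * gr a b t 0 0 * gr a b t' 0 0 + b\<^sup>2 * gr a b t 0 1 * gr a b t' 0 1
     + b\<^sup>2 * gr a b t 1 0 * gr a b t' 1 0 + a\<^sup>2 * gr a b t 1 1 * gr a b t' 1 1 = (if t = t' then 1 else 0)"
  proof -
    have "t \<in> {0,1,2,3}" "t' \<in> {0,1,2,3}" using t by auto
    then show ?thesis
      using a b ab s2 by (auto simp: gr_def rm_def field_simps power2_eq_square)
  qed
  show ?thesis
    unfolding Gmat_gr ipW_imag using key cf by (simp add: a_def b_def)
qed

lemma Iexp_cscale: "Iexp N W (cscale c F) = cscale c (Iexp N W F)"
  by (auto simp: Iexp_def cscale_def fun_eq_iff sum_distrib_left mult_ac)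

lemma cscale_mat2: "cscale c (mat2 p q r s) = mat2 (c*p) (c*q) (c*r) (c*s)"
  by (auto simp: cscale_def mat2_def fun_eq_iff)

lemma mat2_cong: "p = p' \<Longrightarrow> q = q' \<Longrightarrow> r = r' \<Longrightarrow> s = s' \<Longrightarrow> mat2 p q r s = mat2 p' q' r' s'"
  by simp

lemma Gmat_eigen:
  assumes r: "rowo 2 V" and c: "colo 2 V" and nz: "no_zero_entries 2 V" and t: "t < 4"
  shows "Iexp 2 V (Gmat V t) = cscale (lamG t) (Gmat V t)"
proof -
  note cf = cmod_facts[OF r c nz]
  define a where "a = cmod (V 0 0)"
  define b where "b = cmod (V 0 1)"
  have a: "a > 0" and b: "b > 0" and ab: "a\<^sup>2 + b\<^sup>2 = 1" using cf by (auto simp: a_def b_def)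
  have p0: "V 0 0 * cnj (V 0 0) = complex_of_real (a\<^sup>2)" and q0: "V 0 1 * cnj (V 0 1) = complex_of_real (b\<^sup>2)"
    by (simp_all only: a_def b_def complex_norm_square)
  have p: "V 0 0 * cnj (V 0 0) = (complex_of_real a)\<^sup>2" and q: "V 0 (Suc 0) * cnj (V 0 (Suc 0)) = (complex_of_real b)\<^sup>2"
    using p0 q0 by simp_all
  have pq: "(complex_of_real a)\<^sup>2 + (complex_of_real b)\<^sup>2 = 1" using ab by (metis of_real_1 of_real_add of_real_power)
  have pnz: "(complex_of_real a)\<^sup>2 \<noteq> 0" "(complex_of_real b)\<^sup>2 \<noteq> 0" using a b by auto
  have "t \<in> {0,1,2,3}" using t by auto
  then show ?thesis
  proof (elim insertE emptyE)
    assume "t = 0" then show ?thesis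
      using pq by (simp add: Gmat_def Iexp_cscale Iexp2[OF r c nz] p q lamG_def; simp add: algebra_simps)
  next
    assume "t = 1" then show ?thesis
      using pq by (simp add: Gmat_def Iexp_cscale Iexp2[OF r c nz] p q lamG_def; simp add: algebra_simps)
  next
    assume t2: "t = 2" show ?thesis
      unfolding t2 Gmat_def Let_def a_def[symmetric] b_def[symmetric]
      apply (simp add: Iexp_cscale Iexp2[OF r c nz] p q lamG_def; simp add: algebra_simps)
      apply (rule disjI1)
      apply (insert pq)
      apply (rule mat2_cong)
      apply algebra+
      done
  next
    assume t3: "t = 3"
    define P where "P = (complex_of_real a)\<^sup>2"
    define Q where "Q = (complex_of_real b)\<^sup>2"
    have pP: "V 0 0 * cnj (V 0 0) = P" and qQ: "V 0 1 * cnj (V 0 1) = Q"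
      using p0 q0 by (simp_all add: P_def Q_def)
    have PQ: "P + Q = 1" "P \<noteq> 0" "Q \<noteq> 0" using pq pnz by (auto simp: P_def Q_def)
    have h: "Iexp 2 V (mat2 (1/P) (-(1/Q)) (-(1/Q)) (1/P)) = cscale (-1) (mat2 (1/P) (-(1/Q)) (-(1/Q)) (1/P))"
      unfolding Iexp2[OF r c nz] cscale_mat2 pP qQ
      apply (insert PQ)
      apply (rule mat2_cong)
      apply (simp_all add: field_simps)
      apply algebra+
      done
    have g: "Gmat V 3 = cscale (\<i> * complex_of_real (a * b / sqrt 2)) (mat2 (1/P) (-(1/Q)) (-(1/Q)) (1/P))"
      unfolding Gmat_def Let_def a_def[symmetric] b_def[symmetric] P_def Q_def by simp
    show ?thesis unfolding t3 g Iexp_cscale h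
      by (auto simp: cscale_def lamG_def fun_eq_iff)
    qed
qed


definition ok2 :: "cmat \<Rightarrow> bool" where
  "ok2 V \<longleftrightarrow> rowo 2 V \<and> colo 2 V \<and> no_zero_entries 2 V"

lemma kron_list_Cons: "kron_list (A # As) = kron 2 A (2 ^ length As) (kron_list As)"
  by simp

lemma kron_list_ok:
  assumes "\<forall>V\<in>set Vs. ok2 V"
  shows "rowo (2 ^ length Vs) (kron_list Vs) \<and> colo (2 ^ length Vs) (kron_list Vs)
    \<and> no_zero_entries (2 ^ length Vs) (kron_list Vs)"
  using assms
proof (induction Vs)
  case Nil then show ?case by (simp add: rowo_def colo_def no_zero_entries_def)
next
  case (Cons V Vs)
  then have "ok2 V" by simp
  then show ?case using Cons
    by (simp add: ok2_def kron_rowo kron_colo kron_nz)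
qed

lemma Iexp_list:
  "length Vs = length Fs \<Longrightarrow>
   Iexp (2 ^ length Vs) (kron_list Vs) (kron_list Fs) = kron_list (map2 (Iexp 2) Vs Fs)"
proof (induction Vs Fs rule: list_induct2)
  case Nil then show ?case by (auto simp: Iexp_def fun_eq_iff)
next
  case (Cons V Vs F Fs)
  have "Iexp (2 ^ length (V#Vs)) (kron_list (V#Vs)) (kron_list (F#Fs))
      = Iexp (2 * 2 ^ length Vs) (kron 2 V (2 ^ length Vs) (kron_list Vs)) (kron 2 F (2 ^ length Vs) (kron_list Fs))"
    using Cons by simp
  also have "\<dots> = kron 2 (Iexp 2 V F) (2 ^ length Vs) (kron_list (map2 (Iexp 2) Vs Fs))"
    by (simp only: Iexp_kron Cons.IH)
  also have "\<dots> = kron_list (map2 (Iexp 2) (V#Vs) (F#Fs))"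
    using Cons by simp
  finally show ?case .
qed

lemma Gprod_Cons: "length Vs = length s \<Longrightarrow>
  Gprod (V#Vs) (t#s) = kron 2 (Gmat V t) (2 ^ length Vs) (Gprod Vs s)"
  by (simp add: Gprod_def)

lemma Gprod_mspace: "length Vs = length s \<Longrightarrow> Gprod Vs s \<in> mspace (2 ^ length Vs)"
  using kron_list_mspace[of "map2 Gmat Vs s"] by (simp add: Gprod_def)

lemma Gprod_eigen:
  "length Vs = length s \<Longrightarrow> \<forall>V\<in>set Vs. ok2 V \<Longrightarrow> set s \<subseteq> {0..<4} \<Longrightarrow>
   Iexp (2 ^ length Vs) (kron_list Vs) (Gprod Vs s) = cscale (\<Prod>t\<leftarrow>s. lamG t) (Gprod Vs s)"
proof (induction Vs s rule: list_induct2)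
  case Nil then show ?case by (auto simp: Iexp_def Gprod_def cscale_def fun_eq_iff)
next
  case (Cons V Vs t s)
  have okV: "ok2 V" and t: "t < 4" using Cons.prems by auto
  have "Iexp (2 ^ length (V#Vs)) (kron_list (V#Vs)) (Gprod (V#Vs) (t#s))
      = Iexp (2 * 2 ^ length Vs) (kron 2 V (2 ^ length Vs) (kron_list Vs)) (kron 2 (Gmat V t) (2 ^ length Vs) (Gprod Vs s))"
    using Cons.hyps by (simp add: Gprod_Cons)
  also have "\<dots> = kron 2 (cscale (lamG t) (Gmat V t)) (2 ^ length Vs) (cscale (\<Prod>t\<leftarrow>s. lamG t) (Gprod Vs s))"
    using Cons okV t by (simp only: Iexp_kron Gmat_eigen ok2_def) simp
  also have "\<dots> = cscale (\<Prod>t\<leftarrow>t#s. lamG t) (Gprod (V#Vs) (t#s))"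
    using Cons.hyps by (simp add: kron_cscale Gprod_Cons)
  finally show ?case .
qed

lemma ipW_one: "ipW (Suc 0) (kron_list []) (kron_list []) (kron_list []) = 1"
  by (simp add: ipW_def)

lemma Gprod_ortho:
  "length Vs = length s \<Longrightarrow> length s = length s' \<Longrightarrow> \<forall>V\<in>set Vs. ok2 V \<Longrightarrow>
   set s \<subseteq> {0..<4} \<Longrightarrow> set s' \<subseteq> {0..<4} \<Longrightarrow>
   ipW (2 ^ length Vs) (kron_list Vs) (Gprod Vs s) (Gprod Vs s') = (if s = s' then 1 else 0)"
proof (induction Vs s s' rule: list_induct3)
  case Nil then show ?case by (simp add: Gprod_def ipW_def)
next
  case (Cons V Vs t s t' s')
  have okV: "ok2 V" and t: "t < 4" "t' < 4" using Cons.prems by auto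
  have "ipW (2 ^ length (V#Vs)) (kron_list (V#Vs)) (Gprod (V#Vs) (t#s)) (Gprod (V#Vs) (t'#s'))
     = ipW (2 * 2 ^ length Vs) (kron 2 V (2 ^ length Vs) (kron_list Vs)) (kron 2 (Gmat V t) (2 ^ length Vs) (Gprod Vs s))
         (kron 2 (Gmat V t') (2 ^ length Vs) (Gprod Vs s'))"
    using Cons.hyps by (simp add: Gprod_Cons)
  also have "\<dots> = ipW 2 V (Gmat V t) (Gmat V t') * ipW (2 ^ length Vs) (kron_list Vs) (Gprod Vs s) (Gprod Vs s')"
    by (rule ipW_kron)
  also have "\<dots> = (if t#s = t'#s' then 1 else 0)"
    using Cons okV t by (simp add: Gmat_ortho ok2_def)
  finally show ?case .
qed

lemma kron_list_imag:
  "\<forall>F\<in>set Fs. \<forall>i j. - \<i> * F i j \<in> \<real> \<Longrightarrow> (- \<i>) ^ length Fs * kron_list Fs i j \<in> \<real>"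
proof (induction Fs arbitrary: i j)
  case Nil then show ?case by simp
next
  case (Cons F Fs)
  have "(- \<i>) ^ length (F#Fs) * kron_list (F#Fs) i j =
     (if i < 2 * 2 ^ length Fs \<and> j < 2 * 2 ^ length Fs then
       (- \<i> * F (i div 2 ^ length Fs) (j div 2 ^ length Fs)) *
       ((- \<i>) ^ length Fs * kron_list Fs (i mod 2 ^ length Fs) (j mod 2 ^ length Fs)) else 0)"
    by (simp add: kron_def mult_ac)
  then show ?case using Cons by (simp add: Reals_mult)
qed

lemma Gmat_imag: "- \<i> * Gmat V t i j \<in> \<real>"
  by (simp add: Gmat_gr)

lemma Gprod_imag: "length Vs = length s \<Longrightarrow> (- \<i>) ^ length Vs * Gprod Vs s i j \<in> \<real>"
proof -
  assume l: "length Vs = length s"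
  have h: "\<forall>F\<in>set (map2 Gmat Vs s). \<forall>i j. - \<i> * F i j \<in> \<real>"
    using Gmat_imag by auto
  show ?thesis using kron_list_imag[OF h, of i j] l by (simp add: Gprod_def)
qed


lemma mspace_add: "A \<in> mspace N \<Longrightarrow> B \<in> mspace N \<Longrightarrow> A + B \<in> mspace N"
  by (simp add: mspace_def)
lemma mspace_zero: "0 \<in> mspace N"
  by (simp add: mspace_def)
lemma mspace_cscale: "A \<in> mspace N \<Longrightarrow> cscale c A \<in> mspace N"
  by (simp add: mspace_def cscale_def)
lemma mspace_sum: "(\<And>a. a \<in> S \<Longrightarrow> f a \<in> mspace N) \<Longrightarrow> sum f S \<in> mspace N"
  by (induction S rule: infinite_finite_induct) (auto simp: mspace_zero mspace_add)

lemma ipW_zero: "ipW N W 0 H = 0" by (simp add: ipW_def)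
lemma ipW_zero2: "ipW N W H 0 = 0" by (simp add: ipW_def)
lemma ipW_add: "ipW N W (X + Y) H = ipW N W X H + ipW N W Y H"
  by (simp add: ipW_def algebra_simps sum.distrib)
lemma ipW_add2: "ipW N W H (X + Y) = ipW N W H X + ipW N W H Y"
  by (simp add: ipW_def algebra_simps sum.distrib)
lemma ipW_scale: "ipW N W (cscale c X) H = c * ipW N W X H"
  by (simp add: ipW_def cscale_def sum_distrib_left mult_ac)
lemma ipW_scale2: "ipW N W H (cscale c X) = cnj c * ipW N W H X"
  by (simp add: ipW_def cscale_def sum_distrib_left mult_ac)

lemma ipW_sum_left:
  "ipW N W (\<Sum>a\<in>A. cscale (f a) (F a)) H = (\<Sum>a\<in>A. f a * ipW N W (F a) H)"
proof (induction A rule: infinite_finite_induct)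
  case (insert b A)
  have "(\<Sum>a\<in>insert b A. cscale (f a) (F a)) = cscale (f b) (F b) + (\<Sum>a\<in>A. cscale (f a) (F a))"
    using insert(1,2) by (rule sum.insert)
  moreover have "(\<Sum>a\<in>insert b A. f a * ipW N W (F a) H) = f b * ipW N W (F b) H + (\<Sum>a\<in>A. f a * ipW N W (F a) H)"
    using insert(1,2) by (rule sum.insert)
  ultimately show ?case using insert by (simp only: ipW_add ipW_scale)
qed (simp_all add: ipW_def)

lemma ipW_sum_right:
  "ipW N W H (\<Sum>a\<in>A. cscale (f a) (F a)) = (\<Sum>a\<in>A. cnj (f a) * ipW N W H (F a))"
proof (induction A rule: infinite_finite_induct)
  case (insert b A)
  have "(\<Sum>a\<in>insert b A. cscale (f a) (F a)) = cscale (f b) (F b) + (\<Sum>a\<in>A. cscale (f a) (F a))"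
    using insert(1,2) by (rule sum.insert)
  moreover have "(\<Sum>a\<in>insert b A. cnj (f a) * ipW N W H (F a)) = cnj (f b) * ipW N W H (F b) + (\<Sum>a\<in>A. cnj (f a) * ipW N W H (F a))"
    using insert(1,2) by (rule sum.insert)
  ultimately show ?case using insert by (simp only: ipW_add2 ipW_scale2)
qed (simp_all add: ipW_def)


lemma ipW_diff: "ipW N W (X - Y) H = ipW N W X H - ipW N W Y H"
  by (simp add: ipW_def algebra_simps sum_subtractf)
lemma mspace_diff: "A \<in> mspace N \<Longrightarrow> B \<in> mspace N \<Longrightarrow> A - B \<in> mspace N"
  by (simp add: mspace_def)

lemma Iexp_add: "Iexp N W (A + B) = Iexp N W A + Iexp N W B"
  by (auto simp: Iexp_def fun_eq_iff algebra_simps sum.distrib add_divide_distrib)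
lemma Iexp_zero: "Iexp N W 0 = 0"
  by (auto simp: Iexp_def fun_eq_iff)
lemma Iexp_diff: "Iexp N W (A - B) = Iexp N W A - Iexp N W B"
  by (auto simp: Iexp_def fun_eq_iff algebra_simps sum_subtractf diff_divide_distrib)

lemma Iexp_sum: "Iexp N W (\<Sum>a\<in>A. F a) = (\<Sum>a\<in>A. Iexp N W (F a))"
proof (induction A rule: infinite_finite_induct)
  case (insert b A)
  have "(\<Sum>a\<in>insert b A. F a) = F b + (\<Sum>a\<in>A. F a)"
    using insert(1,2) by (rule sum.insert)
  moreover have "(\<Sum>a\<in>insert b A. Iexp N W (F a)) = Iexp N W (F b) + (\<Sum>a\<in>A. Iexp N W (F a))"
    using insert(1,2) by (rule sum.insert)
  ultimately show ?case using insert by (simp only: Iexp_add)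
qed (metis sum.infinite Iexp_zero, metis sum.empty Iexp_zero)

lemma lamG_prod: "(\<Prod>t\<leftarrow>s. lamG t) = (-1) ^ length (filter (\<lambda>t. lamG t = -1) s)"
  by (induction s) (auto simp: lamG_def)

lemma lam_cases: "(\<Prod>t\<leftarrow>s. lamG t) = 1 \<or> (\<Prod>t\<leftarrow>s. lamG t) = -1"
  unfolding lamG_prod by (simp add: minus_one_power_iff)

lemma lam_even: "(\<Prod>t\<leftarrow>s. lamG t) = 1 \<longleftrightarrow> even (length (filter (\<lambda>t. lamG t = -1) s))"
  unfolding lamG_prod by (simp add: minus_one_power_iff)

locale kset =
  fixes Us :: "cmat list" and x :: nat
  assumes ok: "\<forall>V\<in>set Us. ok2 V" and len: "length Us = x"
begin

abbreviation "NN \<equiv> (2::nat) ^ x"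
abbreviation "UU \<equiv> kron_list Us"
abbreviation "GG \<equiv> Gprod Us"
abbreviation "CC \<equiv> choices x"
abbreviation "lam s \<equiv> (\<Prod>t\<leftarrow>s. lamG t)"

lemma U_ok: "rowo NN UU" "colo NN UU" "no_zero_entries NN UU"
  using kron_list_ok[OF ok] len by auto

lemma U_ms: "UU \<in> mspace NN"
  using kron_list_mspace[of Us] len by simp

lemma C_mem: "s \<in> CC \<longleftrightarrow> length s = x \<and> set s \<subseteq> {0..<4}"
  by (simp add: choices_def)

lemma C_fin: "finite CC"
proof -
  have "CC = {s. set s \<subseteq> {0..<4} \<and> length s = x}" by (auto simp: choices_def)
  then show ?thesis by (simp add: finite_lists_length_eq)
qed

lemma C_card: "card CC = 4 ^ x"
proof -
  have "CC = {s. set s \<subseteq> {0..<4::nat} \<and> length s = x}" by (auto simp: choices_def)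
  then show ?thesis by (simp add: card_lists_length_eq)
qed

lemma G_ms: "s \<in> CC \<Longrightarrow> GG s \<in> mspace NN"
  using Gprod_mspace[of Us s] len by (simp add: C_mem)

lemma G_ortho: "s \<in> CC \<Longrightarrow> s' \<in> CC \<Longrightarrow> ipW NN UU (GG s) (GG s') = (if s = s' then 1 else 0)"
  using Gprod_ortho[of Us s s' ] ok len by (simp add: C_mem)

lemma G_eig: "s \<in> CC \<Longrightarrow> Iexp NN UU (GG s) = cscale (lam s) (GG s)"
  using Gprod_eigen[of Us s] ok len by (simp add: C_mem)

lemma G_inj: "inj_on GG CC"
proof (rule inj_onI)
  fix s s' assume "s \<in> CC" "s' \<in> CC" "GG s = GG s'"
  then have "ipW NN UU (GG s) (GG s') = 1" using G_ortho[of s s] by simp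
  then show "s = s'" using G_ortho[of s s'] \<open>s \<in> CC\<close> \<open>s' \<in> CC\<close> by (simp split: if_splits)
qed

lemma coef:
  assumes "S \<subseteq> CC" "t \<in> CC"
  shows "ipW NN UU (\<Sum>s\<in>S. cscale (c s) (GG s)) (GG t) = (if t \<in> S then c t else 0)"
proof -
  have fin: "finite S" using assms C_fin finite_subset by blast
  have "ipW NN UU (\<Sum>s\<in>S. cscale (c s) (GG s)) (GG t) = (\<Sum>s\<in>S. c s * (if s = t then 1 else 0))"
    unfolding ipW_sum_left using assms by (intro sum.cong refl) (auto simp: G_ortho)
  also have "\<dots> = (if t \<in> S then c t else 0)"
    using fin by (simp add: if_distrib[of "\<lambda>v. c _ * v"] cong: if_cong)
  finally show ?thesis .
qed

lemma indep: "cvs.independent (GG ` CC)"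
proof (rule cvs.independent_if_scalars_zero)
  show "finite (GG ` CC)" using C_fin by simp
next
  fix f v assume z: "(\<Sum>v\<in>GG ` CC. cscale (f v) v) = 0" and v: "v \<in> GG ` CC"
  then obtain t where t: "t \<in> CC" "v = GG t" by auto
  have "(\<Sum>v\<in>GG ` CC. cscale (f v) v) = (\<Sum>s\<in>CC. cscale (f (GG s)) (GG s))"
    using G_inj by (simp add: sum.reindex)
  then have "ipW NN UU (\<Sum>s\<in>CC. cscale (f (GG s)) (GG s)) (GG t) = 0"
    using z by (simp add: ipW_def)
  then show "f v = 0" using coef[of CC t] t by simp
qed

definition EE :: "cmat set" where
  "EE = (\<lambda>(a, b). (\<lambda>i j. if i = a \<and> j = b then 1 else 0)) ` ({..<NN} \<times> {..<NN})"

lemma EE_span: "mspace NN \<subseteq> cvs.span EE"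
proof
  fix F assume F: "F \<in> mspace NN"
  define e where "e = (\<lambda>(a::nat, b::nat). (\<lambda>i j. if i = a \<and> j = b then (1::complex) else 0))"
  have "F = (\<Sum>p\<in>{..<NN} \<times> {..<NN}. cscale (F (fst p) (snd p)) (e p))"
  proof (rule ext, rule ext)
    fix i j
    show "F i j = (\<Sum>p\<in>{..<NN} \<times> {..<NN}. cscale (F (fst p) (snd p)) (e p)) i j"
    proof (cases "i < NN \<and> j < NN")
      case True
      have "(\<Sum>p\<in>{..<NN} \<times> {..<NN}. cscale (F (fst p) (snd p)) (e p)) i j
          = (\<Sum>p\<in>{..<NN} \<times> {..<NN}. if p = (i, j) then F i j else 0)"
        unfolding sum_fun_apply2
      proof (intro sum.cong refl)
        fix p :: "nat \<times> nat"
        show "cscale (F (fst p) (snd p)) (e p) i j = (if p = (i, j) then F i j else 0)"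
          by (cases p) (auto simp: cscale_def e_def)
      qed
      also have "\<dots> = F i j" using True by simp
      finally show ?thesis by simp
    next
      case False
      then have "F i j = 0" using F by (auto simp: mspace_def)
      moreover have "(\<Sum>p\<in>{..<NN} \<times> {..<NN}. cscale (F (fst p) (snd p)) (e p)) i j = 0"
        unfolding sum_fun_apply2 using False by (intro sum.neutral) (auto simp: cscale_def e_def)
      ultimately show ?thesis by simp
    qed
  qed
  moreover have "(\<Sum>p\<in>{..<NN} \<times> {..<NN}. cscale (F (fst p) (snd p)) (e p)) \<in> cvs.span EE"
    by (intro cvs.span_sum cvs.span_scale cvs.span_base) (auto simp: EE_def e_def)
  ultimately show "F \<in> cvs.span EE" by simp
qed

lemma EE_card: "finite EE" "card EE \<le> NN * NN"
  unfolding EE_def using card_image_le[of "{..<NN} \<times> {..<NN}"] by (auto simp: card_cartesian_product)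

lemma span_all: "mspace NN \<subseteq> cvs.span (GG ` CC)"
proof
  fix F assume F: "F \<in> mspace NN"
  show "F \<in> cvs.span (GG ` CC)"
  proof (rule ccontr)
    assume nF: "F \<notin> cvs.span (GG ` CC)"
    have i: "cvs.independent (insert F (GG ` CC))"
      using nF indep by (rule cvs.independent_insertI)
    have sub: "insert F (GG ` CC) \<subseteq> cvs.span EE"
      using F G_ms EE_span by auto
    have "card (insert F (GG ` CC)) \<le> card EE"
      using cvs.independent_span_bound[OF EE_card(1) i sub] by simp
    moreover have "F \<notin> GG ` CC" using nF cvs.span_base by blast
    then have "card (insert F (GG ` CC)) = Suc (card CC)"
      using C_fin G_inj by (simp add: card_image)
    moreover have "card CC = NN * NN" using C_card by (simp add: power_mult_distrib[symmetric])
    ultimately show False using EE_card(2) by simp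
  qed
qed

lemma expand: assumes "F \<in> mspace NN"
  shows "F = (\<Sum>s\<in>CC. cscale (ipW NN UU F (GG s)) (GG s))"
proof -
  obtain u where u: "F = (\<Sum>v\<in>GG ` CC. cscale (u v) v)"
    using span_all assms cvs.span_finite[of "GG ` CC"] C_fin by auto
  then have F: "F = (\<Sum>s\<in>CC. cscale (u (GG s)) (GG s))"
    using G_inj by (simp add: sum.reindex)
  have "ipW NN UU F (GG s) = u (GG s)" if "s \<in> CC" for s
    using coef[of CC s "\<lambda>s. u (GG s)"] that F by simp
  then show ?thesis using F by (metis (no_types, lifting) sum.cong)
qed

lemma cscale_zero: "cscale 0 X = 0"
  by (auto simp: cscale_def fun_eq_iff)

lemma zero_if_coefs: assumes "F \<in> mspace NN" "\<And>t. t \<in> CC \<Longrightarrow> ipW NN UU F (GG t) = 0" shows "F = 0"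
proof -
  have "F = (\<Sum>s\<in>CC. cscale (ipW NN UU F (GG s)) (GG s))" using expand[OF assms(1)] .
  also have "\<dots> = (\<Sum>s\<in>CC. 0)" using assms(2) by (intro sum.cong refl) (simp add: cscale_zero)
  finally show ?thesis by simp
qed

lemma Iexp_coef: assumes "F \<in> mspace NN" "t \<in> CC"
  shows "ipW NN UU (Iexp NN UU F) (GG t) = lam t * ipW NN UU F (GG t)"
proof -
  have "Iexp NN UU F = (\<Sum>s\<in>CC. Iexp NN UU (cscale (ipW NN UU F (GG s)) (GG s)))"
    using expand[OF assms(1)] by (metis Iexp_sum)
  also have "\<dots> = (\<Sum>s\<in>CC. cscale (ipW NN UU F (GG s) * lam s) (GG s))"
    by (intro sum.cong refl) (simp only: Iexp_cscale G_eig, simp add: cscale_def fun_eq_iff mult_ac)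
  finally show ?thesis using coef[of CC t] assms by (simp add: mult.commute)
qed

lemma eig_char: "F \<in> eigsp NN UU mu \<longleftrightarrow> F \<in> mspace NN \<and> (\<forall>t\<in>CC. (lam t - mu) * ipW NN UU F (GG t) = 0)"
proof -
  have E: "eigsp NN UU mu = {F \<in> mspace NN. Iexp NN UU F = cscale mu F}"
    using eigsp_eq U_ok by blast
  show ?thesis
  proof
    assume "F \<in> eigsp NN UU mu"
    then have F: "F \<in> mspace NN" "Iexp NN UU F = cscale mu F" using E by auto
    have "(lam t - mu) * ipW NN UU F (GG t) = 0" if "t \<in> CC" for t
    proof -
      have "lam t * ipW NN UU F (GG t) = mu * ipW NN UU F (GG t)"
      proof -
        have "lam t * ipW NN UU F (GG t) = ipW NN UU (Iexp NN UU F) (GG t)"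
          using Iexp_coef[OF F(1) that] by simp
        also have "\<dots> = mu * ipW NN UU F (GG t)" unfolding F(2) ipW_scale ..
        finally show ?thesis .
      qed
      then show ?thesis by (simp add: left_diff_distrib)
    qed
    then show "F \<in> mspace NN \<and> (\<forall>t\<in>CC. (lam t - mu) * ipW NN UU F (GG t) = 0)" using F by auto
  next
    assume F: "F \<in> mspace NN \<and> (\<forall>t\<in>CC. (lam t - mu) * ipW NN UU F (GG t) = 0)"
    have ms: "Iexp NN UU F - cscale mu F \<in> mspace NN"
      using F by (simp add: mspace_diff Iexp_mspace mspace_cscale)
    have "Iexp NN UU F - cscale mu F = 0"
      by (rule zero_if_coefs[OF ms]) (use F in \<open>auto simp: ipW_diff ipW_scale Iexp_coef algebra_simps\<close>)
    then show "F \<in> eigsp NN UU mu" using E F by simp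
  qed
qed

end

context kset begin

lemma G_in_eig: "s \<in> CC \<Longrightarrow> GG s \<in> eigsp NN UU (lam s)"
  unfolding eig_char using G_ms by (auto simp: G_ortho)

lemma G_nz: "s \<in> CC \<Longrightarrow> GG s \<noteq> 0"
  using G_ortho[of s s] by (auto simp: ipW_def)

lemma coef_eig: "F \<in> eigsp NN UU mu \<Longrightarrow> t \<in> CC \<Longrightarrow> lam t \<noteq> mu \<Longrightarrow> ipW NN UU F (GG t) = 0"
  unfolding eig_char by auto

lemma eig_ms: "F \<in> eigsp NN UU mu \<Longrightarrow> F \<in> mspace NN"
  unfolding eig_char by auto

lemma claim1: "F \<in> mspace NN \<Longrightarrow> F \<noteq> 0 \<Longrightarrow> I_op NN UU F = cscale mu F \<Longrightarrow> mu = 1 \<or> mu = -1"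
proof -
  assume F: "F \<in> mspace NN" "F \<noteq> 0" "I_op NN UU F = cscale mu F"
  then have "F \<in> eigsp NN UU mu" by (simp add: eigsp_def)
  obtain t where t: "t \<in> CC" "ipW NN UU F (GG t) \<noteq> 0"
    using zero_if_coefs[OF F(1)] F(2) by blast
  then have "lam t = mu" using coef_eig \<open>F \<in> eigsp NN UU mu\<close> by blast
  then show ?thesis using lam_cases[of t] by auto
qed

lemma claim2a: "eigsp NN UU 1 \<noteq> {0}"
proof -
  have s: "replicate x 0 \<in> CC" by (auto simp: C_mem)
  have "lam (replicate x 0) = 1" by (simp add: lamG_def)
  then have "GG (replicate x 0) \<in> eigsp NN UU 1" using G_in_eig[OF s] by simp
  then show ?thesis using G_nz[OF s] by auto
qed

lemma claim2b: assumes "x \<ge> 1" shows "eigsp NN UU (-1) \<noteq> {0}"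
proof -
  have s: "3 # replicate (x - 1) 0 \<in> CC" using assms by (auto simp: C_mem)
  have "lam (3 # replicate (x-1) 0) = -1" by (simp add: lamG_def)
  then have "GG (3 # replicate (x-1) 0) \<in> eigsp NN UU (-1)" using G_in_eig[OF s] by simp
  then show ?thesis using G_nz[OF s] by auto
qed

lemma eig_sum: assumes "S \<subseteq> CC" "\<And>s. s \<in> S \<Longrightarrow> lam s = mu"
  shows "(\<Sum>s\<in>S. cscale (c s) (GG s)) \<in> eigsp NN UU mu"
  unfolding eig_char
proof
  show "(\<Sum>s\<in>S. cscale (c s) (GG s)) \<in> mspace NN"
    using assms(1) by (intro mspace_sum mspace_cscale) (auto simp: G_ms)
  show "\<forall>t\<in>CC. (lam t - mu) * ipW NN UU (\<Sum>s\<in>S. cscale (c s) (GG s)) (GG t) = 0"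
    using assms by (auto simp: coef)
qed

lemma claim3: assumes F: "F \<in> mspace NN"
  shows "\<exists>!p. fst p \<in> eigsp NN UU 1 \<and> snd p \<in> eigsp NN UU (-1) \<and> F = fst p + snd p"
proof -
  define c where "c s = ipW NN UU F (GG s)" for s
  define S1 where "S1 = {s \<in> CC. lam s = 1}"
  define S2 where "S2 = {s \<in> CC. lam s \<noteq> 1}"
  define A where "A = (\<Sum>s\<in>S1. cscale (c s) (GG s))"
  define B where "B = (\<Sum>s\<in>S2. cscale (c s) (GG s))"
  have A: "A \<in> eigsp NN UU 1" unfolding A_def by (rule eig_sum) (auto simp: S1_def)
  have B: "B \<in> eigsp NN UU (-1)" unfolding B_def by (rule eig_sum) (use lam_cases in \<open>auto simp: S2_def\<close>)
  have "F = (\<Sum>s\<in>CC. cscale (c s) (GG s))" using expand[OF F] by (simp add: c_def)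
  also have "\<dots> = A + B"
  proof -
    have CS: "CC = S1 \<union> S2" "S1 \<inter> S2 = {}" by (auto simp: S1_def S2_def)
    have fin: "finite S1" "finite S2" using C_fin by (auto simp: S1_def S2_def)
    show ?thesis unfolding A_def B_def CS(1) by (rule sum.union_disjoint[OF fin CS(2)])
  qed
  finally have FAB: "F = A + B" .
  show ?thesis
  proof (rule ex1I[of _ "(A, B)"])
    show "fst (A, B) \<in> eigsp NN UU 1 \<and> snd (A, B) \<in> eigsp NN UU (-1) \<and> F = fst (A, B) + snd (A, B)"
      using A B FAB by simp
  next
    fix p assume p: "fst p \<in> eigsp NN UU 1 \<and> snd p \<in> eigsp NN UU (-1) \<and> F = fst p + snd p"
    define X where "X = A - fst p"
    have X2: "X = snd p - B" using p FAB by (simp add: X_def algebra_simps)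
    have Xms: "X \<in> mspace NN" unfolding X_def using A p by (intro mspace_diff eig_ms) auto
    have "X = 0"
    proof (rule zero_if_coefs[OF Xms])
      fix t assume t: "t \<in> CC"
      show "ipW NN UU X (GG t) = 0"
      proof (cases "lam t = 1")
        case True
        then have "lam t \<noteq> -1" by simp
        then show ?thesis unfolding X2 ipW_diff using coef_eig[OF _ t] p B by (metis diff_zero)
      next
        case False
        then show ?thesis unfolding X_def ipW_diff using coef_eig[OF _ t] p A by (metis diff_zero)
      qed
    qed
    then have "fst p = A" "snd p = B" using X_def X2 by simp_all
    then show "p = (A, B)" by (simp add: prod_eq_iff)
  qed
qed

lemma claim4: "A \<in> eigsp NN UU 1 \<Longrightarrow> B \<in> eigsp NN UU (-1) \<Longrightarrow> ipW NN UU A B = 0"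
proof -
  assume A: "A \<in> eigsp NN UU 1" and B: "B \<in> eigsp NN UU (-1)"
  have "ipW NN UU A B = ipW NN UU A (\<Sum>s\<in>CC. cscale (ipW NN UU B (GG s)) (GG s))"
    using expand[OF eig_ms[OF B]] by simp
  also have "\<dots> = (\<Sum>s\<in>CC. cnj (ipW NN UU B (GG s)) * ipW NN UU A (GG s))"
    by (rule ipW_sum_right)
  also have "\<dots> = 0"
  proof (rule sum.neutral, rule ballI)
    fix s assume s: "s \<in> CC"
    show "cnj (ipW NN UU B (GG s)) * ipW NN UU A (GG s) = 0"
    proof (cases "lam s = 1")
      case True then show ?thesis using coef_eig[OF B s] by simp
    next
      case False then show ?thesis using coef_eig[OF A s] by simp
    qed
  qed
  finally show ?thesis .
qed

definition Ev where "Ev = {s \<in> CC. even (length (filter (\<lambda>t. lamG t = -1) s))}"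

lemma Ev_lam: "Ev = {s \<in> CC. lam s = 1}"
  by (simp add: Ev_def lam_even)

lemma Ev_sub: "Ev \<subseteq> CC" by (auto simp: Ev_def)

lemma claim9: "cvs.dim (eigsp NN UU 1) = card Ev"
proof (rule cvs.dim_unique[of "GG ` Ev"])
  show "GG ` Ev \<subseteq> eigsp NN UU 1" by (auto simp: Ev_lam) (metis G_in_eig)
  show "eigsp NN UU 1 \<subseteq> cvs.span (GG ` Ev)"
  proof
    fix F assume F: "F \<in> eigsp NN UU 1"
    have "F = (\<Sum>s\<in>CC. cscale (ipW NN UU F (GG s)) (GG s))" using expand[OF eig_ms[OF F]] .
    also have "\<dots> = (\<Sum>s\<in>Ev. cscale (ipW NN UU F (GG s)) (GG s))"
    proof (rule sum.mono_neutral_right[OF C_fin Ev_sub], rule ballI)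
      fix s assume "s \<in> CC - Ev"
      then have "s \<in> CC" "lam s \<noteq> 1" by (auto simp: Ev_lam)
      then show "cscale (ipW NN UU F (GG s)) (GG s) = 0" using coef_eig[OF F] by (simp add: cscale_zero)
    qed
    also have "\<dots> \<in> cvs.span (GG ` Ev)"
      by (intro cvs.span_sum cvs.span_scale cvs.span_base) auto
    finally show "F \<in> cvs.span (GG ` Ev)" .
  qed
  show "cvs.independent (GG ` Ev)"
    using indep by (rule cvs.independent_mono) (use Ev_sub in auto)
  show "card (GG ` Ev) = card Ev"
    using inj_on_subset[OF G_inj Ev_sub] by (rule card_image)
qed

end

lemma adj_mmult: "adj (mmult N A B) = mmult N (adj B) (adj A)"
  by (auto simp: adj_def mmult_def fun_eq_iff mult.commute)
lemma adj_adj: "adj (adj A) = A"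
  by (simp add: adj_def)
lemma had_neg: "hadamard (- Y) W = - hadamard Y W"
  by (simp add: hadamard_def fun_eq_iff)
lemma adj_neg: "adj (- A) = - adj A"
  by (simp add: adj_def fun_eq_iff)
lemma mmult_neg: "mmult N A (- B) = - mmult N A B"
  by (simp add: mmult_def fun_eq_iff sum_negf)
lemma mconj_imag: "(\<And>i j. Re (Y i j) = 0) \<Longrightarrow> mconj Y = - Y"
  by (simp add: mconj_def fun_eq_iff complex_eq_iff)
lemma had_sum: "hadamard (\<Sum>a\<in>A. f a) W = (\<Sum>a\<in>A. hadamard (f a) W)"
  by (simp add: hadamard_def fun_eq_iff sum_fun_apply2 sum_distrib_right)
lemma had_cscale: "hadamard (cscale c X) W = cscale c (hadamard X W)"
  by (simp add: hadamard_def cscale_def fun_eq_iff mult.assoc)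
lemma rscale_eq: "rscale r X = cscale (complex_of_real r) X"
  by (simp add: rscale_def cscale_def)

lemma ipW_real:
  assumes "\<And>i j. Re (Y i j) = 0" "\<And>i j. Re (Z i j) = 0"
  shows "ipW N W Y Z \<in> \<real>"
  unfolding complex_is_Real_iff ipW_def using assms by (simp add: Im_sum)

locale kset1 = kset +
  assumes x1: "1 \<le> x"
begin

lemma antiherm_iff:
  assumes Y: "Y \<in> mspace NN" and im: "\<And>i j. Re (Y i j) = 0"
  shows "adj (mmult NN (hadamard Y UU) (adj UU)) = - mmult NN (hadamard Y UU) (adj UU)
     \<longleftrightarrow> Y \<in> eigsp NN UU 1"
proof -
  have CY: "mmult NN (hadamard Y UU) (adj UU) = C_op NN UU Y" by (simp add: C_op_def)
  have aC: "adj (C_op NN UU Y) = - D_op NN UU Y"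
  proof -
    have "adj (C_op NN UU Y) = mmult NN UU (adj (hadamard Y UU))"
      by (simp only: C_op_def adj_mmult adj_adj)
    moreover have "D_op NN UU Y = - mmult NN UU (adj (hadamard Y UU))"
      by (simp only: D_op_def mconj_imag[OF im] had_neg adj_neg mmult_neg)
    ultimately show ?thesis by (simp only: minus_minus)
  qed
  have E: "eigsp NN UU 1 = {F \<in> mspace NN. Iexp NN UU F = F}"
    using eigsp_eq[OF U_ok, of 1] by (simp add: cscale_def)
  have "C_op NN UU Y = D_op NN UU Y \<longleftrightarrow> Iexp NN UU Y = Y"
  proof
    assume "C_op NN UU Y = D_op NN UU Y"
    then have "C_op NN UU (Iexp NN UU Y) = C_op NN UU Y" using C_Iexp[OF U_ok(1,3)] by simp
    then show "Iexp NN UU Y = Y" using C_inj[OF U_ok(2,3) Iexp_mspace Y] by simp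
  next
    assume "Iexp NN UU Y = Y"
    then show "C_op NN UU Y = D_op NN UU Y" using C_Iexp[OF U_ok(1,3), of Y] by simp
  qed
  moreover have "adj (C_op NN UU Y) = - C_op NN UU Y \<longleftrightarrow> C_op NN UU Y = D_op NN UU Y"
    unfolding aC by (metis neg_equal_iff_equal)
  moreover have "Y \<in> eigsp NN UU 1 \<longleftrightarrow> Iexp NN UU Y = Y" using E Y by blast
  ultimately show ?thesis unfolding CY by blast
qed

definition ww :: complex where "ww = (- \<i>) ^ (x - 1)"
definition HH where "HH s = cscale ww (GG s)"

lemma ww_unit: "ww * cnj ww = 1" "cnj ww * ww = 1"
proof -
  have "ww * cnj ww = (- \<i>) ^ (x - 1) * \<i> ^ (x - 1)" by (simp add: ww_def)
  also have "\<dots> = ((- \<i>) * \<i>) ^ (x - 1)" by (simp only: power_mult_distrib)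
  finally have "ww * cnj ww = ((- \<i>) * \<i>) ^ (x - 1)" .
  then show "ww * cnj ww = 1" by simp
  then show "cnj ww * ww = 1" by (simp add: mult.commute)
qed

lemma H_imag: "s \<in> CC \<Longrightarrow> Re (HH s i j) = 0"
proof -
  assume s: "s \<in> CC"
  have "(- \<i>) ^ x * GG s i j \<in> \<real>" using Gprod_imag[of Us s i j] len s by (simp add: C_mem)
  then obtain r where r: "(- \<i>) ^ x * GG s i j = complex_of_real r" by (auto elim: Reals_cases)
  have "(- \<i>) ^ x = (- \<i>) ^ Suc (x - 1)" using x1 by simp
  also have "\<dots> = (- \<i>) * ww" by (simp only: power_Suc ww_def)
  finally have "(- \<i>) ^ x = (- \<i>) * ww" .
  then have r2: "(- \<i>) * ww * GG s i j = complex_of_real r" using r by simp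
  have "HH s i j = \<i> * ((- \<i>) * ww * GG s i j)" by (simp add: HH_def cscale_def mult.assoc[symmetric])
  then have "HH s i j = \<i> * complex_of_real r" unfolding r2 .
  then show ?thesis by simp
qed

lemma H_ms: "s \<in> CC \<Longrightarrow> HH s \<in> mspace NN"
  by (simp add: HH_def G_ms mspace_cscale)

lemma H_ortho: "s \<in> CC \<Longrightarrow> t \<in> CC \<Longrightarrow> ipW NN UU (HH s) (HH t) = (if s = t then 1 else 0)"
  by (simp add: HH_def ipW_scale ipW_scale2 G_ortho mult.assoc[symmetric] ww_unit)

lemma H_eig: "s \<in> Ev \<Longrightarrow> HH s \<in> eigsp NN UU 1"
proof -
  assume s: "s \<in> Ev"
  then have sC: "s \<in> CC" and l: "lam s = 1" using Ev_lam by auto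
  show ?thesis unfolding eig_char
    using sC l by (auto simp: HH_def G_ms mspace_cscale ipW_scale G_ortho)
qed

lemma had_inj: assumes X: "X \<in> mspace NN" and Y: "Y \<in> mspace NN" and h: "hadamard X UU = hadamard Y UU"
  shows "X = Y"
proof (rule ext, rule ext)
  fix i j
  show "X i j = Y i j"
  proof (cases "i < NN \<and> j < NN")
    case True
    then have "UU i j \<noteq> 0" using U_ok(3) by (simp add: no_zero_entries_def)
    moreover have "X i j * UU i j = Y i j * UU i j" using h by (simp add: hadamard_def fun_eq_iff)
    ultimately show ?thesis by simp
  next
    case False then show ?thesis using X Y by (auto simp: mspace_def)
  qed
qed

lemma H_inj: "inj_on (\<lambda>s. hadamard (HH s) UU) Ev"
proof (rule inj_onI)
  fix s t assume st: "s \<in> Ev" "t \<in> Ev" "hadamard (HH s) UU = hadamard (HH t) UU"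
  then have sC: "s \<in> CC" "t \<in> CC" using Ev_sub by auto
  then have "HH s = HH t" using had_inj[OF H_ms H_ms st(3)] by simp
  then show "s = t" using H_ortho[OF sC] H_ortho[OF sC(2) sC(2)] by (simp split: if_splits)
qed

lemma Dset_sub: "(\<lambda>s. hadamard (HH s) UU) ` Ev \<subseteq> Dset NN UU"
proof
  fix X assume "X \<in> (\<lambda>s. hadamard (HH s) UU) ` Ev"
  then obtain s where s: "s \<in> Ev" "X = hadamard (HH s) UU" by auto
  have sC: "s \<in> CC" using s Ev_sub by auto
  have eq: "(\<lambda>i j. \<i> * complex_of_real (Im (HH s i j))) = HH s"
    using H_imag[OF sC] by (simp add: fun_eq_iff complex_eq_iff)
  have "adj (mmult NN (hadamard (HH s) UU) (adj UU)) = - mmult NN (hadamard (HH s) UU) (adj UU)"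
    using antiherm_iff[OF H_ms[OF sC] H_imag[OF sC]] H_eig[OF s(1)] by simp
  then show "X \<in> Dset NN UU" unfolding Dset_def s(2)
    by (intro CollectI exI[of _ "\<lambda>i j. Im (HH s i j)"]) (simp add: eq)
qed

lemma Dset_span: "Dset NN UU \<subseteq> rvs.span ((\<lambda>s. hadamard (HH s) UU) ` Ev)"
proof
  fix X assume "X \<in> Dset NN UU"
  then obtain R where X: "X = hadamard (\<lambda>i j. \<i> * complex_of_real (R i j)) UU"
    and ah: "adj (mmult NN (hadamard (\<lambda>i j. \<i> * complex_of_real (R i j)) UU) (adj UU))
      = - mmult NN (hadamard (\<lambda>i j. \<i> * complex_of_real (R i j)) UU) (adj UU)"
    unfolding Dset_def by blast
  define Y where "Y = (\<lambda>i j. if i < NN \<and> j < NN then \<i> * complex_of_real (R i j) else 0)"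
  have hY: "hadamard Y UU = hadamard (\<lambda>i j. \<i> * complex_of_real (R i j)) UU"
    using U_ms by (auto simp: Y_def hadamard_def mspace_def fun_eq_iff)
  have Yms: "Y \<in> mspace NN" by (simp add: Y_def mspace_def)
  have Yim: "\<And>i j. Re (Y i j) = 0" by (simp add: Y_def)
  have Yeig: "Y \<in> eigsp NN UU 1" using antiherm_iff[OF Yms Yim] ah hY by simp
  define e where "e s = ipW NN UU Y (HH s)" for s
  have ereal: "e s = complex_of_real (Re (e s))" if "s \<in> CC" for s
    using ipW_real[OF Yim H_imag[OF that]] by (simp add: e_def)
  have "Y = (\<Sum>s\<in>CC. cscale (ipW NN UU Y (GG s)) (GG s))" using expand[OF Yms] .
  also have "\<dots> = (\<Sum>s\<in>Ev. cscale (ipW NN UU Y (GG s)) (GG s))"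
  proof (rule sum.mono_neutral_right[OF C_fin Ev_sub], rule ballI)
    fix s assume "s \<in> CC - Ev"
    then have "s \<in> CC" "lam s \<noteq> 1" by (auto simp: Ev_lam)
    then show "cscale (ipW NN UU Y (GG s)) (GG s) = 0" using coef_eig[OF Yeig] by (simp add: cscale_zero)
  qed
  also have "\<dots> = (\<Sum>s\<in>Ev. cscale (complex_of_real (Re (e s))) (HH s))"
  proof (rule sum.cong[OF refl])
    fix s assume "s \<in> Ev"
    then have sC: "s \<in> CC" using Ev_sub by auto
    have "cscale (complex_of_real (Re (e s))) (HH s) = cscale (e s) (HH s)" using ereal[OF sC] by simp
    also have "\<dots> = cscale (cnj ww * ipW NN UU Y (GG s) * ww) (GG s)"
      unfolding e_def HH_def ipW_scale2 by (simp add: cscale_def fun_eq_iff mult_ac)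
    also have "\<dots> = cscale (ipW NN UU Y (GG s)) (GG s)"
      using ww_unit by (simp add: mult_ac)
    finally show "cscale (ipW NN UU Y (GG s)) (GG s) = cscale (complex_of_real (Re (e s))) (HH s)" by simp
  qed
  finally have "X = (\<Sum>s\<in>Ev. rscale (Re (e s)) (hadamard (HH s) UU))"
    unfolding X hY[symmetric] by (simp add: had_sum had_cscale rscale_eq)
  also have "\<dots> \<in> rvs.span ((\<lambda>s. hadamard (HH s) UU) ` Ev)"
    by (intro rvs.span_sum rvs.span_scale rvs.span_base) auto
  finally show "X \<in> rvs.span ((\<lambda>s. hadamard (HH s) UU) ` Ev)" .
qed

lemma Dset_indep: "rvs.independent ((\<lambda>s. hadamard (HH s) UU) ` Ev)"
proof (rule rvs.independent_if_scalars_zero)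
  have "finite Ev" using C_fin Ev_sub finite_subset by blast
  then show "finite ((\<lambda>s. hadamard (HH s) UU) ` Ev)" by simp
next
  fix f v assume z: "(\<Sum>v\<in>(\<lambda>s. hadamard (HH s) UU) ` Ev. rscale (f v) v) = 0"
    and v: "v \<in> (\<lambda>s. hadamard (HH s) UU) ` Ev"
  then obtain t where t: "t \<in> Ev" "v = hadamard (HH t) UU" by auto
  have tC: "t \<in> CC" using t Ev_sub by auto
  define Z where "Z = (\<Sum>s\<in>Ev. cscale (complex_of_real (f (hadamard (HH s) UU))) (HH s))"
  have "hadamard Z UU = (\<Sum>v\<in>(\<lambda>s. hadamard (HH s) UU) ` Ev. rscale (f v) v)"
    unfolding Z_def had_sum had_cscale using H_inj by (simp add: sum.reindex rscale_eq)
  then have hZ: "hadamard Z UU = hadamard 0 UU" unfolding z by (simp add: hadamard_def zero_fun_def)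
  have Zms: "Z \<in> mspace NN" unfolding Z_def using Ev_sub
    by (intro mspace_sum mspace_cscale H_ms) auto
  have Z0: "Z = 0" by (rule had_inj[OF Zms mspace_zero hZ])
  have fin: "finite Ev" using C_fin Ev_sub finite_subset by blast
  have "ipW NN UU Z (HH t) = (\<Sum>s\<in>Ev. complex_of_real (f (hadamard (HH s) UU)) * (if s = t then 1 else 0))"
    unfolding Z_def ipW_sum_left using Ev_sub tC by (intro sum.cong refl) (auto simp: H_ortho)
  also have "\<dots> = complex_of_real (f v)" using fin t by (simp add: if_distrib cong: if_cong)
  finally show "f v = 0" using Z0 by (simp add: ipW_def)
qed

lemma claim11: "Dnum NN UU = card Ev"
  unfolding Dnum_def
proof (rule rvs.dim_unique[OF Dset_sub Dset_span Dset_indep])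
  show "card ((\<lambda>s. hadamard (HH s) UU) ` Ev) = card Ev" using H_inj by (rule card_image)
qed

end

abbreviation cnt :: "nat list \<Rightarrow> nat" where "cnt s \<equiv> length (filter (\<lambda>t. lamG t = -1) s)"

lemma cnt_Cons: "cnt (t # s) = (if t = 3 then Suc (cnt s) else cnt s)"
  by (simp add: lamG_def)

lemma sum4: "(\<Sum>t\<in>{0..<4::nat}. f t) = f 0 + f 1 + f 2 + f 3"
  by (simp add: numeral_eq_Suc atLeast0LessThan lessThan_Suc add_ac)

lemma choices_fin: "finite (choices x)"
proof -
  have "choices x = {s. set s \<subseteq> {0..<4::nat} \<and> length s = x}" by (auto simp: choices_def)
  then show ?thesis by (simp add: finite_lists_length_eq)
qed

lemma card_choices_Suc:
  "card {s \<in> choices (Suc x). P s} = (\<Sum>t\<in>{0..<4}. card {s \<in> choices x. P (t # s)})"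
proof -
  have eq: "{s \<in> choices (Suc x). P s} = (\<lambda>(t, s). t # s) ` (SIGMA t:{0..<4}. {s \<in> choices x. P (t # s)})"
  proof
    show "{s \<in> choices (Suc x). P s} \<subseteq> (\<lambda>(t, s). t # s) ` (SIGMA t:{0..<4}. {s \<in> choices x. P (t # s)})"
    proof
      fix s assume "s \<in> {s \<in> choices (Suc x). P s}"
      then obtain t s' where "s = t # s'" "t < 4" "s' \<in> choices x" "P (t # s')"
        by (cases s) (auto simp: choices_def)
      then show "s \<in> (\<lambda>(t, s). t # s) ` (SIGMA t:{0..<4}. {s \<in> choices x. P (t # s)})" by force
    qed
  qed (auto simp: choices_def)
  have inj: "inj_on (\<lambda>(t, s). t # s) (SIGMA t:{0..<4::nat}. {s \<in> choices x. P (t # s)})"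
    by (auto simp: inj_on_def)
  have "card {s \<in> choices (Suc x). P s} = card (SIGMA t:{0..<4::nat}. {s \<in> choices x. P (t # s)})"
    unfolding eq by (rule card_image[OF inj])
  also have "\<dots> = (\<Sum>t\<in>{0..<4}. card {s \<in> choices x. P (t # s)})"
    using choices_fin by (intro card_SigmaI) auto
  finally show ?thesis .
qed

lemma count_main:
  "card {s \<in> choices x. even (cnt s)} = card {s \<in> choices x. odd (cnt s)} + 2 ^ x
   \<and> card {s \<in> choices x. even (cnt s)} + card {s \<in> choices x. odd (cnt s)} = 4 ^ x"
proof (induction x)
  case 0
  have "{s \<in> choices 0. even (cnt s)} = {[]}" "{s \<in> choices 0. odd (cnt s)} = {}"
    by (auto simp: choices_def)
  then show ?case by (simp only: card.empty) simp
next
  case (Suc x)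
  define E where "E = card {s \<in> choices x. even (cnt s)}"
  define Od where "Od = card {s \<in> choices x. odd (cnt s)}"
  have e: "card {s \<in> choices (Suc x). even (cnt s)} = 3 * E + Od"
    unfolding card_choices_Suc sum4 by (simp add: lamG_def E_def Od_def)
  have o: "card {s \<in> choices (Suc x). odd (cnt s)} = 3 * Od + E"
    unfolding card_choices_Suc sum4 by (simp add: lamG_def E_def Od_def)
  show ?case using Suc unfolding e o E_def[symmetric] Od_def[symmetric] by simp
qed

lemma count_even: "card {s \<in> choices x. even (length (filter (\<lambda>t. lamG t = -1) s))} = 2 ^ x * (2 ^ x + 1) div 2"
proof -
  define E where "E = card {s \<in> choices x. even (cnt s)}"
  define Od where "Od = card {s \<in> choices x. odd (cnt s)}"
  have "E = Od + 2 ^ x" "E + Od = 4 ^ x" using count_main[of x] by (simp_all add: E_def Od_def)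
  then have "2 * E = 4 ^ x + 2 ^ x" by linarith
  moreover have "(4::nat) ^ x = 2 ^ x * 2 ^ x" by (simp add: power_mult_distrib[symmetric])
  ultimately have "2 ^ x * (2 ^ x + 1) = 2 * E" by (simp add: algebra_simps)
  then show ?thesis unfolding E_def by simp
qed


theorem corollary3p17:
  fixes Us :: "cmat list" and x N :: nat and U :: cmat
  assumes "x \<ge> 1" and "length Us = x"
    and "\<forall>V \<in> set Us. unitary_mat 2 V \<and> no_zero_entries 2 V"
    and "U = kron_list Us" and "N = 2 ^ x"
  shows
    "(\<forall>lam F. F \<in> mspace N \<and> F \<noteq> 0 \<and> I_op N U F = cscale lam F \<longrightarrow> lam = 1 \<or> lam = -1)
     \<and> eigsp N U 1 \<noteq> {0} \<and> eigsp N U (-1) \<noteq> {0}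
     \<and> (\<forall>F \<in> mspace N. \<exists>!p. fst p \<in> eigsp N U 1 \<and> snd p \<in> eigsp N U (-1) \<and> F = fst p + snd p)
     \<and> (\<forall>A \<in> eigsp N U 1. \<forall>B \<in> eigsp N U (-1). ipW N U A B = 0)
     \<and> (\<forall>k<x. \<forall>t<4. Gmat (Us ! k) t \<in> eigsp 2 (Us ! k) (lamG t))
     \<and> (\<forall>s \<in> choices x. Gprod Us s \<in> eigsp N U (\<Prod>t\<leftarrow>s. lamG t))
     \<and> (\<forall>s \<in> choices x. \<forall>s' \<in> choices x.
          ipW N U (Gprod Us s) (Gprod Us s') = (if s = s' then 1 else 0))
     \<and> (\<forall>F \<in> mspace N. \<exists>c. F = (\<Sum>s \<in> choices x. cscale (c s) (Gprod Us s)))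
     \<and> vector_space.dim cscale (eigsp N U 1)
         = card {s \<in> choices x. even (length (filter (\<lambda>t. lamG t = -1) s))}
     \<and> card {s \<in> choices x. even (length (filter (\<lambda>t. lamG t = -1) s))} = 2 ^ x * (2 ^ x + 1) div 2
     \<and> Dnum N U = vector_space.dim cscale (eigsp N U 1)
     \<and> Dnum N U = 2 ^ x * (2 ^ x + 1) div 2"
proof -
  have ok: "\<forall>V\<in>set Us. ok2 V"
    using assms(3) by (auto simp: ok2_def unitary_rowo unitary_colo)
  interpret kset1 Us x
    using ok assms(1,2) by unfold_locales auto
  have NU: "N = NN" "U = UU" using assms by simp_all
  have c5: "\<forall>k<x. \<forall>t<4. Gmat (Us ! k) t \<in> eigsp 2 (Us ! k) (lamG t)"
  proof (intro allI impI)
    fix k t :: nat assume k: "k < x" and t: "t < 4"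
    have "Us ! k \<in> set Us" using k assms(2) by simp
    then have o: "ok2 (Us ! k)" using ok by blast
    have ms: "Gmat (Us ! k) t \<in> mspace 2"
      by (auto simp: mspace_def Gmat_gr gr_def rm_def)
    show "Gmat (Us ! k) t \<in> eigsp 2 (Us ! k) (lamG t)"
      using o ms Gmat_eigen[of "Us ! k" t] t eigsp_eq[of 2 "Us ! k" "lamG t"] by (simp add: ok2_def)
  qed
  have c8: "\<forall>F \<in> mspace N. \<exists>c. F = (\<Sum>s \<in> choices x. cscale (c s) (Gprod Us s))"
    unfolding NU
  proof
    fix F assume F: "F \<in> mspace NN"
    show "\<exists>c. F = (\<Sum>s \<in> choices x. cscale (c s) (Gprod Us s))"
      by (rule exI[of _ "\<lambda>s. ipW NN UU F (GG s)"]) (rule expand[OF F])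
  qed
  have cnt: "card {s \<in> choices x. even (length (filter (\<lambda>t. lamG t = -1) s))} = card Ev"
    by (simp add: Ev_def)
  show ?thesis
    unfolding NU
    using claim1 claim2a claim2b[OF assms(1)] claim3 claim4 c5 G_in_eig G_ortho c8[unfolded NU]
      claim9 count_even[of x] claim11 cnt
    by auto
qed

end
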